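(* Let $\Re$ be a commutative Krasner hyperring with identity $1\ne0$, $\phi:L(\Re)\to L(\Re)\cup\{\emptyset\}$ a function, and $T$ a $\phi$-prime proper hyperideal of $\Re$. (i) If $M$ is a hyperideal of $\Re$ with $M\subseteq T$, then $T/M$ is a $\phi_M$-prime hyperideal of $\Re/M$. (ii) If $S$ is a multiplicatively closed subset of $\Re$ with $T\cap S=\emptyset$ and $\phi(T)_S\subseteq\phi_S(T_S)$, then $T_S$ is a $\phi_S$-prime hyperideal of $\Re_S$.
   Context: Krasner hyperring: $(\Re,\oplus)$ canonical hypergroup, $(\Re,\circ)$ commutative semigroup with identity $1\ne0$, $0$ absorbing, distributive. Hyperideals, $L(\Re)$ as usual. For a hyperideal $M$, $\Re/M=\{a\oplus M\}$ is the quotient Krasner hyperring, and for a hyperideal $N\supseteq M$, $N/M=\{a\oplus M: a\in N\}$; $\phi_M:L(\Re/M)\to L(\Re/M)\cup\{\emptyset\}$ is $\phi_M(N/M)=(\phi(N)\oplus M)/M$, and $\emptyset$ if $\phi(N)=\emptyset$. For multiplicatively closed $S$ ($1\in S$, closed under $\circ$), $\Re_S$ is the localization (fractions $a/s$), $N_S=\{a/s: a\in N,s\in S\}$; for $J\in L(\Re_S)$, $J\cap\Re=\{a\in\Re: a/1\in J\}$ and $\phi_S(J)=(\phi(J\cap\Re))_S$, with $\phi_S(J)=\emptyset$ if $\phi(J\cap\Re)=\emptyset$. A hyperideal $N$ is $\psi$-prime if $a\circ b\in N$, $a\circ b\notin\psi(N)$ imply $a\in N$ or $b\in N$. *)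

theory Defs
  imports Main
begin

record 'a hyperring =
  hcarrier :: "'a set"
  hadd :: "'a \<Rightarrow> 'a \<Rightarrow> 'a set"
  hmult :: "'a \<Rightarrow> 'a \<Rightarrow> 'a"
  hzero :: 'a
  hone :: 'a

definition hadd_set :: "('a, 'b) hyperring_scheme \<Rightarrow> 'a set \<Rightarrow> 'a set \<Rightarrow> 'a set" where
  "hadd_set R A B = (\<Union>a\<in>A. \<Union>b\<in>B. hadd R a b)"

definition hneg :: "('a, 'b) hyperring_scheme \<Rightarrow> 'a \<Rightarrow> 'a" where
  "hneg R a = (THE a'. a' \<in> hcarrier R \<and> hzero R \<in> hadd R a a')"

definition canonical_hypergroup :: "('a, 'b) hyperring_scheme \<Rightarrow> bool" where
  "canonical_hypergroup R \<longleftrightarrow>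
     (\<forall>a\<in>hcarrier R. \<forall>b\<in>hcarrier R. hadd R a b \<subseteq> hcarrier R \<and> hadd R a b \<noteq> {}) \<and>
     (\<forall>a\<in>hcarrier R. \<forall>b\<in>hcarrier R. \<forall>c\<in>hcarrier R.
        hadd_set R (hadd R a b) {c} = hadd_set R {a} (hadd R b c)) \<and>
     (\<forall>a\<in>hcarrier R. \<forall>b\<in>hcarrier R. hadd R a b = hadd R b a) \<and>
     hzero R \<in> hcarrier R \<and>
     (\<forall>a\<in>hcarrier R. hadd R a (hzero R) = {a}) \<and>
     (\<forall>a\<in>hcarrier R. \<exists>!a'. a' \<in> hcarrier R \<and> hzero R \<in> hadd R a a') \<and>
     (\<forall>a\<in>hcarrier R. \<forall>b\<in>hcarrier R. \<forall>c\<in>hcarrier R.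
        c \<in> hadd R a b \<longrightarrow> a \<in> hadd R c (hneg R b) \<and> b \<in> hadd R c (hneg R a))"

definition krasner_hyperring :: "('a, 'b) hyperring_scheme \<Rightarrow> bool" where
  "krasner_hyperring R \<longleftrightarrow>
     canonical_hypergroup R \<and>
     (\<forall>a\<in>hcarrier R. \<forall>b\<in>hcarrier R. hmult R a b \<in> hcarrier R) \<and>
     (\<forall>a\<in>hcarrier R. \<forall>b\<in>hcarrier R. \<forall>c\<in>hcarrier R.
        hmult R (hmult R a b) c = hmult R a (hmult R b c)) \<and>
     (\<forall>a\<in>hcarrier R. \<forall>b\<in>hcarrier R. hmult R a b = hmult R b a) \<and>
     hone R \<in> hcarrier R \<and>
     (\<forall>a\<in>hcarrier R. hmult R (hone R) a = a) \<and>
     hone R \<noteq> hzero R \<and>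
     (\<forall>a\<in>hcarrier R. hmult R (hzero R) a = hzero R) \<and>
     (\<forall>a\<in>hcarrier R. \<forall>b\<in>hcarrier R. \<forall>c\<in>hcarrier R.
        hmult R a ` hadd R b c = hadd R (hmult R a b) (hmult R a c))"

definition hyperideal :: "('a, 'b) hyperring_scheme \<Rightarrow> 'a set \<Rightarrow> bool" where
  "hyperideal R N \<longleftrightarrow>
     N \<subseteq> hcarrier R \<and> N \<noteq> {} \<and>
     (\<forall>a\<in>N. \<forall>b\<in>N. hadd R a (hneg R b) \<subseteq> N) \<and>
     (\<forall>r\<in>hcarrier R. \<forall>a\<in>N. hmult R r a \<in> N)"

definition phi_prime :: "('a, 'b) hyperring_scheme \<Rightarrow> ('a set \<Rightarrow> 'a set) \<Rightarrow> 'a set \<Rightarrow> bool" where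
  "phi_prime R \<psi> N \<longleftrightarrow>
     hyperideal R N \<and>
     (\<forall>a\<in>hcarrier R. \<forall>b\<in>hcarrier R.
        hmult R a b \<in> N \<and> hmult R a b \<notin> \<psi> N \<longrightarrow> a \<in> N \<or> b \<in> N)"

definition phi_function :: "('a, 'b) hyperring_scheme \<Rightarrow> ('a set \<Rightarrow> 'a set) \<Rightarrow> bool" where
  "phi_function R \<phi> \<longleftrightarrow> (\<forall>N. hyperideal R N \<longrightarrow> \<phi> N = {} \<or> hyperideal R (\<phi> N))"

definition coset :: "('a, 'b) hyperring_scheme \<Rightarrow> 'a set \<Rightarrow> 'a \<Rightarrow> 'a set" where
  "coset R M a = hadd_set R {a} M"

definition quot :: "('a, 'b) hyperring_scheme \<Rightarrow> 'a set \<Rightarrow> 'a set hyperring" where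
  "quot R M =
     \<lparr> hcarrier = coset R M ` hcarrier R,
       hadd = (\<lambda>X Y. {coset R M c | c a b. a \<in> hcarrier R \<and> b \<in> hcarrier R \<and>
                         X = coset R M a \<and> Y = coset R M b \<and> c \<in> hadd R a b}),
       hmult = (\<lambda>X Y. THE Z. \<exists>a b. a \<in> hcarrier R \<and> b \<in> hcarrier R \<and>
                         X = coset R M a \<and> Y = coset R M b \<and> Z = coset R M (hmult R a b)),
       hzero = coset R M (hzero R),
       hone = coset R M (hone R) \<rparr>"

definition quot_ideal :: "('a, 'b) hyperring_scheme \<Rightarrow> 'a set \<Rightarrow> 'a set \<Rightarrow> 'a set set" where
  "quot_ideal R N M = coset R M ` N"

text \<open>phi_M(N/M) = (phi(N) \<oplus> M)/M, where N is the hyperideal of R corresponding to N/M.\<close>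
definition phi_quot :: "('a, 'b) hyperring_scheme \<Rightarrow> ('a set \<Rightarrow> 'a set) \<Rightarrow> 'a set \<Rightarrow> 'a set set \<Rightarrow> 'a set set" where
  "phi_quot R \<phi> M J =
     (let N = {a \<in> hcarrier R. coset R M a \<in> J} in
      if \<phi> N = {} then {} else quot_ideal R (hadd_set R (\<phi> N) M) M)"

definition mult_closed :: "('a, 'b) hyperring_scheme \<Rightarrow> 'a set \<Rightarrow> bool" where
  "mult_closed R S \<longleftrightarrow> S \<subseteq> hcarrier R \<and> hone R \<in> S \<and>
     (\<forall>s\<in>S. \<forall>t\<in>S. hmult R s t \<in> S)"

text \<open>the fraction a/s: the class of (a,s) under (a,s) ~ (b,t) iff u a t = u b s for some u in S\<close>
definition frac :: "('a, 'b) hyperring_scheme \<Rightarrow> 'a set \<Rightarrow> 'a \<Rightarrow> 'a \<Rightarrow> ('a \<times> 'a) set" where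
  "frac R S a s = {(b, t). b \<in> hcarrier R \<and> t \<in> S \<and>
      (\<exists>u\<in>S. hmult R u (hmult R a t) = hmult R u (hmult R b s))}"

definition localization :: "('a, 'b) hyperring_scheme \<Rightarrow> 'a set \<Rightarrow> ('a \<times> 'a) set hyperring" where
  "localization R S =
     \<lparr> hcarrier = {frac R S a s | a s. a \<in> hcarrier R \<and> s \<in> S},
       hadd = (\<lambda>X Y. {frac R S c (hmult R s t) | c a b s t.
                  a \<in> hcarrier R \<and> b \<in> hcarrier R \<and> s \<in> S \<and> t \<in> S \<and>
                  X = frac R S a s \<and> Y = frac R S b t \<and>
                  c \<in> hadd R (hmult R a t) (hmult R b s)}),
       hmult = (\<lambda>X Y. THE Z. \<exists>a b s t.
                  a \<in> hcarrier R \<and> b \<in> hcarrier R \<and> s \<in> S \<and> t \<in> S \<and>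
                  X = frac R S a s \<and> Y = frac R S b t \<and>
                  Z = frac R S (hmult R a b) (hmult R s t)),
       hzero = frac R S (hzero R) (hone R),
       hone = frac R S (hone R) (hone R) \<rparr>"

definition loc_ideal :: "('a, 'b) hyperring_scheme \<Rightarrow> 'a set \<Rightarrow> 'a set \<Rightarrow> ('a \<times> 'a) set set" where
  "loc_ideal R S N = {frac R S a s | a s. a \<in> N \<and> s \<in> S}"

definition contraction :: "('a, 'b) hyperring_scheme \<Rightarrow> 'a set \<Rightarrow> ('a \<times> 'a) set set \<Rightarrow> 'a set" where
  "contraction R S J = {a \<in> hcarrier R. frac R S a (hone R) \<in> J}"

definition phi_loc :: "('a, 'b) hyperring_scheme \<Rightarrow> ('a set \<Rightarrow> 'a set) \<Rightarrow> 'a set \<Rightarrow> ('a \<times> 'a) set set \<Rightarrow> ('a \<times> 'a) set set" where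
  "phi_loc R \<phi> S J =
     (if \<phi> (contraction R S J) = {} then {} else loc_ideal R S (\<phi> (contraction R S J)))"

end

theory Submission
  imports Defs
begin


locale KR = fixes R :: "('a,'b) hyperring_scheme" assumes kr: "krasner_hyperring R"
begin

lemma CH: "canonical_hypergroup R" using kr unfolding krasner_hyperring_def by (elim conjE)

lemma ax_add_closed: "\<forall>a\<in>hcarrier R. \<forall>b\<in>hcarrier R. hadd R a b \<subseteq> hcarrier R \<and> hadd R a b \<noteq> {}"
  using CH unfolding canonical_hypergroup_def by (elim conjE) assumption
lemma ax_assoc: "\<forall>a\<in>hcarrier R. \<forall>b\<in>hcarrier R. \<forall>c\<in>hcarrier R.
        hadd_set R (hadd R a b) {c} = hadd_set R {a} (hadd R b c)"
  using CH unfolding canonical_hypergroup_def by (elim conjE) assumption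
lemma ax_comm: "\<forall>a\<in>hcarrier R. \<forall>b\<in>hcarrier R. hadd R a b = hadd R b a"
  using CH unfolding canonical_hypergroup_def by (elim conjE) assumption
lemma zero_in[simp]: "hzero R \<in> hcarrier R"
  using CH unfolding canonical_hypergroup_def by (elim conjE) assumption
lemma ax_zero: "\<forall>a\<in>hcarrier R. hadd R a (hzero R) = {a}"
  using CH unfolding canonical_hypergroup_def by (elim conjE) assumption
lemma ax_neg: "\<forall>a\<in>hcarrier R. \<exists>!a'. a' \<in> hcarrier R \<and> hzero R \<in> hadd R a a'"
  using CH unfolding canonical_hypergroup_def by (elim conjE) assumption
lemma rev_ax: "\<forall>a\<in>hcarrier R. \<forall>b\<in>hcarrier R. \<forall>c\<in>hcarrier R.
        c \<in> hadd R a b \<longrightarrow> a \<in> hadd R c (hneg R b) \<and> b \<in> hadd R c (hneg R a)"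
  using CH unfolding canonical_hypergroup_def by (elim conjE) assumption

lemma add_closed: "a \<in> hcarrier R \<Longrightarrow> b \<in> hcarrier R \<Longrightarrow> hadd R a b \<subseteq> hcarrier R"
  using ax_add_closed by simp
lemma add_comm: "a \<in> hcarrier R \<Longrightarrow> b \<in> hcarrier R \<Longrightarrow> hadd R a b = hadd R b a"
  using ax_comm by simp
lemma add_zero: "a \<in> hcarrier R \<Longrightarrow> hadd R a (hzero R) = {a}"
  using ax_zero by simp
lemma zero_add: "a \<in> hcarrier R \<Longrightarrow> hadd R (hzero R) a = {a}"
  using add_zero add_comm by simp
lemma neg_ex1: "a \<in> hcarrier R \<Longrightarrow> \<exists>!a'. a' \<in> hcarrier R \<and> hzero R \<in> hadd R a a'"
  using ax_neg by simp
lemma neg: "a \<in> hcarrier R \<Longrightarrow> hneg R a \<in> hcarrier R \<and> hzero R \<in> hadd R a (hneg R a)"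
  unfolding hneg_def using theI'[OF neg_ex1] .
lemma neg_in[simp]: "a \<in> hcarrier R \<Longrightarrow> hneg R a \<in> hcarrier R" using neg by blast
lemma neg_unique: "a \<in> hcarrier R \<Longrightarrow> b \<in> hcarrier R \<Longrightarrow> hzero R \<in> hadd R a b \<Longrightarrow> b = hneg R a"
proof -
  assume a: "a \<in> hcarrier R" "b \<in> hcarrier R" "hzero R \<in> hadd R a b"
  show ?thesis using neg_ex1[OF a(1)] neg[OF a(1)] a by blast
qed
lemma rev: "a \<in> hcarrier R \<Longrightarrow> b \<in> hcarrier R \<Longrightarrow> c \<in> hadd R a b \<Longrightarrow>
   a \<in> hadd R c (hneg R b) \<and> b \<in> hadd R c (hneg R a)"
proof -
  assume a: "a \<in> hcarrier R" "b \<in> hcarrier R" "c \<in> hadd R a b"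
  then have "c \<in> hcarrier R" using add_closed by blast
  with a show ?thesis using rev_ax by simp
qed
lemma assoc: "a \<in> hcarrier R \<Longrightarrow> b \<in> hcarrier R \<Longrightarrow> c \<in> hcarrier R \<Longrightarrow>
   (\<Union>x\<in>hadd R a b. hadd R x c) = (\<Union>y\<in>hadd R b c. hadd R a y)"
  using ax_assoc unfolding hadd_set_def by simp
lemma assocD: "a \<in> hcarrier R \<Longrightarrow> b \<in> hcarrier R \<Longrightarrow> c \<in> hcarrier R \<Longrightarrow> x \<in> hadd R a b
  \<Longrightarrow> y \<in> hadd R x c \<Longrightarrow> \<exists>w\<in>hadd R b c. y \<in> hadd R a w"
proof -
  assume a: "a \<in> hcarrier R" "b \<in> hcarrier R" "c \<in> hcarrier R" "x \<in> hadd R a b" "y \<in> hadd R x c"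
  then have "y \<in> (\<Union>x\<in>hadd R a b. hadd R x c)" by blast
  then show ?thesis using assoc[OF a(1-3)] by blast
qed
lemma neg_neg[simp]: "a \<in> hcarrier R \<Longrightarrow> hneg R (hneg R a) = a"
proof -
  assume a: "a \<in> hcarrier R"
  have "hzero R \<in> hadd R (hneg R a) a" using neg[OF a] add_comm[OF a neg_in[OF a]] by simp
  then show ?thesis using neg_unique[OF neg_in[OF a] a] by simp
qed
lemma neg_zero[simp]: "hneg R (hzero R) = hzero R"
  using neg_unique[OF zero_in zero_in] add_zero[OF zero_in] by simp
lemma neg_sum: "a \<in> hcarrier R \<Longrightarrow> b \<in> hcarrier R \<Longrightarrow> c \<in> hadd R a b \<Longrightarrow>
   hneg R c \<in> hadd R (hneg R a) (hneg R b)"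
proof -
  assume a: "a \<in> hcarrier R" "b \<in> hcarrier R" "c \<in> hadd R a b"
  then have c: "c \<in> hcarrier R" using add_closed by blast
  have 1: "a \<in> hadd R c (hneg R b)" using rev a by blast
  have 2: "hneg R b \<in> hadd R a (hneg R c)" using rev[OF c neg_in[OF a(2)] 1] by blast
  have "hneg R c \<in> hadd R (hneg R b) (hneg R a)" using rev[OF a(1) neg_in[OF c] 2] by blast
  then show ?thesis using add_comm a by simp
qed

lemma ax_mul_closed: "\<forall>a\<in>hcarrier R. \<forall>b\<in>hcarrier R. hmult R a b \<in> hcarrier R"
  using kr unfolding krasner_hyperring_def by (elim conjE) assumption
lemma ax_mul_assoc: "\<forall>a\<in>hcarrier R. \<forall>b\<in>hcarrier R. \<forall>c\<in>hcarrier R.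
        hmult R (hmult R a b) c = hmult R a (hmult R b c)"
  using kr unfolding krasner_hyperring_def by (elim conjE) assumption
lemma ax_mul_comm: "\<forall>a\<in>hcarrier R. \<forall>b\<in>hcarrier R. hmult R a b = hmult R b a"
  using kr unfolding krasner_hyperring_def by (elim conjE) assumption
lemma one_in[simp]: "hone R \<in> hcarrier R"
  using kr unfolding krasner_hyperring_def by (elim conjE) assumption
lemma ax_one: "\<forall>a\<in>hcarrier R. hmult R (hone R) a = a"
  using kr unfolding krasner_hyperring_def by (elim conjE) assumption
lemma ax_zero_mul: "\<forall>a\<in>hcarrier R. hmult R (hzero R) a = hzero R"
  using kr unfolding krasner_hyperring_def by (elim conjE) assumption
lemma ax_distrib: "\<forall>a\<in>hcarrier R. \<forall>b\<in>hcarrier R. \<forall>c\<in>hcarrier R.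
        hmult R a ` hadd R b c = hadd R (hmult R a b) (hmult R a c)"
  using kr unfolding krasner_hyperring_def by (elim conjE) assumption

lemma mul_closed[simp]: "a \<in> hcarrier R \<Longrightarrow> b \<in> hcarrier R \<Longrightarrow> hmult R a b \<in> hcarrier R"
  using ax_mul_closed by simp
lemma mul_assoc: "a \<in> hcarrier R \<Longrightarrow> b \<in> hcarrier R \<Longrightarrow> c \<in> hcarrier R \<Longrightarrow>
  hmult R (hmult R a b) c = hmult R a (hmult R b c)"
  using ax_mul_assoc by simp
lemma mul_comm: "a \<in> hcarrier R \<Longrightarrow> b \<in> hcarrier R \<Longrightarrow> hmult R a b = hmult R b a"
  using ax_mul_comm by simp
lemma mul_lcomm: "a \<in> hcarrier R \<Longrightarrow> b \<in> hcarrier R \<Longrightarrow> c \<in> hcarrier R \<Longrightarrow>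
  hmult R a (hmult R b c) = hmult R b (hmult R a c)"
proof -
  assume a: "a \<in> hcarrier R" "b \<in> hcarrier R" "c \<in> hcarrier R"
  have "hmult R a (hmult R b c) = hmult R (hmult R a b) c" using mul_assoc a by simp
  also have "\<dots> = hmult R (hmult R b a) c" using mul_comm a by simp
  also have "\<dots> = hmult R b (hmult R a c)" using mul_assoc a by simp
  finally show ?thesis .
qed
lemmas mul_ac = mul_assoc mul_comm mul_lcomm
lemma one_mul[simp]: "a \<in> hcarrier R \<Longrightarrow> hmult R (hone R) a = a"
  using ax_one by simp
lemma mul_one[simp]: "a \<in> hcarrier R \<Longrightarrow> hmult R a (hone R) = a"
  using one_mul mul_comm[OF _ one_in] by simp
lemma zero_mul[simp]: "a \<in> hcarrier R \<Longrightarrow> hmult R (hzero R) a = hzero R"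
  using ax_zero_mul by simp
lemma mul_zero[simp]: "a \<in> hcarrier R \<Longrightarrow> hmult R a (hzero R) = hzero R"
  using zero_mul mul_comm[OF _ zero_in] by simp
lemma distribD: "a \<in> hcarrier R \<Longrightarrow> b \<in> hcarrier R \<Longrightarrow> c \<in> hcarrier R \<Longrightarrow> x \<in> hadd R b c \<Longrightarrow>
  hmult R a x \<in> hadd R (hmult R a b) (hmult R a c)"
  using ax_distrib by (metis imageI)
lemma mul_neg: "x \<in> hcarrier R \<Longrightarrow> y \<in> hcarrier R \<Longrightarrow> hmult R x (hneg R y) = hneg R (hmult R x y)"
proof -
  assume a: "x \<in> hcarrier R" "y \<in> hcarrier R"
  have "hmult R x (hzero R) \<in> hadd R (hmult R x y) (hmult R x (hneg R y))"
    using distribD[OF a neg_in[OF a(2)]] neg[OF a(2)] by blast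
  then have "hzero R \<in> hadd R (hmult R x y) (hmult R x (hneg R y))" using a by simp
  then show ?thesis using neg_unique a by simp
qed
lemma neg_mul: "x \<in> hcarrier R \<Longrightarrow> y \<in> hcarrier R \<Longrightarrow> hmult R (hneg R x) y = hneg R (hmult R x y)"
  using mul_neg[of y x] mul_comm by simp

lemma ideal_sub: "hyperideal R N \<Longrightarrow> N \<subseteq> hcarrier R" unfolding hyperideal_def by blast
lemma ideal_subD: "hyperideal R N \<Longrightarrow> a \<in> N \<Longrightarrow> a \<in> hcarrier R" unfolding hyperideal_def by blast
lemma ideal_ax: "hyperideal R N \<Longrightarrow> a \<in> N \<Longrightarrow> b \<in> N \<Longrightarrow> hadd R a (hneg R b) \<subseteq> N"
  unfolding hyperideal_def by blast
lemma ideal_zero: "hyperideal R N \<Longrightarrow> hzero R \<in> N"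
proof -
  assume N: "hyperideal R N"
  then obtain a where a: "a \<in> N" unfolding hyperideal_def by blast
  then have "hadd R a (hneg R a) \<subseteq> N" using ideal_ax N by blast
  then show ?thesis using neg[OF ideal_subD[OF N a]] by blast
qed
lemma ideal_neg: "hyperideal R N \<Longrightarrow> b \<in> N \<Longrightarrow> hneg R b \<in> N"
proof -
  assume N: "hyperideal R N" "b \<in> N"
  then have "hadd R (hzero R) (hneg R b) \<subseteq> N" using ideal_zero ideal_ax by blast
  then show ?thesis using zero_add[OF neg_in[OF ideal_subD[OF N]]] by simp
qed
lemma ideal_add: "hyperideal R N \<Longrightarrow> a \<in> N \<Longrightarrow> b \<in> N \<Longrightarrow> hadd R a b \<subseteq> N"
proof -
  assume N: "hyperideal R N" "a \<in> N" "b \<in> N"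
  then have "hadd R a (hneg R (hneg R b)) \<subseteq> N" using ideal_neg ideal_ax by blast
  then show ?thesis using ideal_subD[OF N(1,3)] by simp
qed
lemma ideal_mul: "hyperideal R N \<Longrightarrow> r \<in> hcarrier R \<Longrightarrow> a \<in> N \<Longrightarrow> hmult R r a \<in> N"
  unfolding hyperideal_def by blast
lemma ideal_mul2: "hyperideal R N \<Longrightarrow> r \<in> hcarrier R \<Longrightarrow> a \<in> N \<Longrightarrow> hmult R a r \<in> N"
  using ideal_mul mul_comm ideal_subD by metis

end

context KR begin

lemma coset_mem: "x \<in> coset R M y \<longleftrightarrow> (\<exists>m\<in>M. x \<in> hadd R y m)"
  unfolding coset_def hadd_set_def by blast

context fixes M assumes M: "hyperideal R M"
begin

lemma self_coset: "y \<in> hcarrier R \<Longrightarrow> y \<in> coset R M y"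
  using coset_mem ideal_zero[OF M] add_zero by blast

lemma coset_carrier: "y \<in> hcarrier R \<Longrightarrow> coset R M y \<subseteq> hcarrier R"
  using coset_mem add_closed ideal_subD[OF M] by blast

lemma coset_sub: "y \<in> hcarrier R \<Longrightarrow> x \<in> coset R M y \<Longrightarrow> coset R M x \<subseteq> coset R M y"
proof
  fix z assume y: "y \<in> hcarrier R" and x: "x \<in> coset R M y" and z: "z \<in> coset R M x"
  obtain m where m: "m \<in> M" "x \<in> hadd R y m" using x coset_mem by blast
  obtain m' where m': "m' \<in> M" "z \<in> hadd R x m'" using z coset_mem by blast
  obtain w where w: "w \<in> hadd R m m'" "z \<in> hadd R y w"
    using assocD[OF y ideal_subD[OF M m(1)] ideal_subD[OF M m'(1)] m(2) m'(2)] by blast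
  have "w \<in> M" using ideal_add[OF M m(1) m'(1)] w(1) by blast
  then show "z \<in> coset R M y" using w(2) coset_mem by blast
qed

lemma coset_rev: "y \<in> hcarrier R \<Longrightarrow> x \<in> coset R M y \<Longrightarrow> y \<in> coset R M x"
proof -
  assume y: "y \<in> hcarrier R" and x: "x \<in> coset R M y"
  obtain m where m: "m \<in> M" "x \<in> hadd R y m" using x coset_mem by blast
  have "y \<in> hadd R x (hneg R m)" using rev[OF y ideal_subD[OF M m(1)] m(2)] by blast
  then show ?thesis using coset_mem ideal_neg[OF M m(1)] by blast
qed

lemma coset_eq: "y \<in> hcarrier R \<Longrightarrow> x \<in> coset R M y \<Longrightarrow> coset R M x = coset R M y"
proof -
  assume y: "y \<in> hcarrier R" and x: "x \<in> coset R M y"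
  have xc: "x \<in> hcarrier R" using coset_carrier[OF y] x by blast
  show ?thesis using coset_sub[OF y x] coset_sub[OF xc coset_rev[OF y x]] by blast
qed

lemma coset_eqD: "a \<in> hcarrier R \<Longrightarrow> coset R M a = coset R M b \<Longrightarrow> a \<in> coset R M b"
  using self_coset by blast

lemma coset_zero: "coset R M (hzero R) = M"
  using coset_mem zero_add ideal_subD[OF M] by auto

lemma coset_in_ideal: "M \<subseteq> T \<Longrightarrow> hyperideal R T \<Longrightarrow> a \<in> T \<Longrightarrow> coset R M a \<subseteq> T"
  using coset_mem ideal_add by blast

lemma coset_mul: "c \<in> hcarrier R \<Longrightarrow> y \<in> hcarrier R \<Longrightarrow> x \<in> coset R M y \<Longrightarrow>
   hmult R c x \<in> coset R M (hmult R c y)"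
proof -
  assume c: "c \<in> hcarrier R" and y: "y \<in> hcarrier R" and x: "x \<in> coset R M y"
  obtain m where m: "m \<in> M" "x \<in> hadd R y m" using x coset_mem by blast
  have "hmult R c x \<in> hadd R (hmult R c y) (hmult R c m)"
    using distribD[OF c y ideal_subD[OF M m(1)] m(2)] .
  then show ?thesis using coset_mem ideal_mul[OF M c m(1)] by blast
qed

lemma coset_neg: "y \<in> hcarrier R \<Longrightarrow> x \<in> coset R M y \<Longrightarrow> hneg R x \<in> coset R M (hneg R y)"
proof -
  assume y: "y \<in> hcarrier R" and x: "x \<in> coset R M y"
  obtain m where m: "m \<in> M" "x \<in> hadd R y m" using x coset_mem by blast
  have "hneg R x \<in> hadd R (hneg R y) (hneg R m)" using neg_sum[OF y ideal_subD[OF M m(1)] m(2)] .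
  then show ?thesis using coset_mem ideal_neg[OF M m(1)] by blast
qed

lemma quot_mult: assumes a: "a \<in> hcarrier R" and b: "b \<in> hcarrier R" shows "
  hmult (quot R M) (coset R M a) (coset R M b) = coset R M (hmult R a b)"
  unfolding quot_def hyperring.select_convs
  apply (rule the_equality)
  subgoal apply (rule exI[of _ a], rule exI[of _ b]) using a b by simp
  subgoal premises p for Z
proof -
  obtain a' b' where ab: "a' \<in> hcarrier R" "b' \<in> hcarrier R" "coset R M a = coset R M a'"
    "coset R M b = coset R M b'" "Z = coset R M (hmult R a' b')" using p by blast
  have 1: "a' \<in> coset R M a" using coset_eqD[OF ab(1)] ab(3) by simp
  have 2: "b' \<in> coset R M b" using coset_eqD[OF ab(2)] ab(4) by simp
  have "coset R M (hmult R b' a') = coset R M (hmult R b' a)"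
    using coset_eq[OF _ coset_mul[OF ab(2) a 1]] ab a by simp
  moreover have "coset R M (hmult R a b') = coset R M (hmult R a b)"
    using coset_eq[OF _ coset_mul[OF a b 2]] ab a b by simp
  moreover have "hmult R a' b' = hmult R b' a'" using mul_comm ab by simp
  moreover have "hmult R b' a = hmult R a b'" using mul_comm ab a by simp
  ultimately show "Z = coset R M (hmult R a b)" using ab by simp
qed
  done

lemma quot_neg: assumes b: "b \<in> hcarrier R" shows "hneg (quot R M) (coset R M b) = coset R M (hneg R b)"
  unfolding hneg_def[of "quot R M"] unfolding quot_def hyperring.select_convs
  apply (rule the_equality)
  subgoal apply (rule conjI)
     apply (rule imageI, rule neg_in[OF b])
    apply (rule CollectI, rule exI[of _ "hzero R"], rule exI[of _ b], rule exI[of _ "hneg R b"])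
    using b neg[OF b] by simp
  subgoal premises p for Z
proof -
  from p have "coset R M (hzero R) \<in> {coset R M c |c a ba. a \<in> hcarrier R \<and> ba \<in> hcarrier R \<and>
      coset R M b = coset R M a \<and> Z = coset R M ba \<and> c \<in> hadd R a ba}" by (rule conjunct2)
  then have "\<exists>w y z. coset R M (hzero R) = coset R M w \<and> y \<in> hcarrier R \<and> z \<in> hcarrier R \<and>
     coset R M b = coset R M y \<and> Z = coset R M z \<and> w \<in> hadd R y z" by simp
  then obtain w y z where w: "coset R M (hzero R) = coset R M w" "y \<in> hcarrier R" "z \<in> hcarrier R"
     "coset R M b = coset R M y" "Z = coset R M z" "w \<in> hadd R y z" by blast
  have wc: "w \<in> hcarrier R" using w(2,3,6) add_closed by blast
  have "w \<in> coset R M (hzero R)" using coset_eqD[OF wc] w(1) by simp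
  then have wM: "w \<in> M" using coset_zero by simp
  have "z \<in> hadd R w (hneg R y)" using rev[OF w(2,3,6)] by blast
  then have "z \<in> hadd R (hneg R y) w" using add_comm[OF wc neg_in[OF w(2)]] by simp
  then have "z \<in> coset R M (hneg R y)" using wM coset_mem by blast
  then have 1: "coset R M z = coset R M (hneg R y)" using coset_eq[OF neg_in[OF w(2)]] by blast
  have "y \<in> coset R M b" using coset_eqD[OF w(2)] w(4) by simp
  then have "hneg R y \<in> coset R M (hneg R b)" using coset_neg[OF b] by blast
  then have "coset R M (hneg R y) = coset R M (hneg R b)" using coset_eq[OF neg_in[OF b]] by blast
  then show "Z = coset R M (hneg R b)" using 1 w(5) by simp
qed
  done

end
end

context KR begin

lemma quot_carrier: "hcarrier (quot R M) = coset R M ` hcarrier R"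
  unfolding quot_def by simp
lemma quot_add: "hadd (quot R M) X Y = {coset R M c | c a b. a \<in> hcarrier R \<and> b \<in> hcarrier R \<and>
                         X = coset R M a \<and> Y = coset R M b \<and> c \<in> hadd R a b}"
  unfolding quot_def by simp

lemma part1:
  assumes M: "hyperideal R M" and MT: "M \<subseteq> T" and P: "phi_prime R \<phi> T"
  shows "phi_prime (quot R M) (phi_quot R \<phi> M) (quot_ideal R T M)"
proof -
  have T: "hyperideal R T" using P unfolding phi_prime_def by blast
  have Pr: "\<And>a b. a \<in> hcarrier R \<Longrightarrow> b \<in> hcarrier R \<Longrightarrow> hmult R a b \<in> T \<Longrightarrow> hmult R a b \<notin> \<phi> T
     \<Longrightarrow> a \<in> T \<or> b \<in> T" using P unfolding phi_prime_def by blast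
  have TC: "T \<subseteq> hcarrier R" using ideal_sub[OF T] .
  have h1: "quot_ideal R T M \<subseteq> hcarrier (quot R M)"
    unfolding quot_carrier quot_ideal_def using TC by blast
  have h2: "quot_ideal R T M \<noteq> {}" unfolding quot_ideal_def using ideal_zero[OF T] by blast
  have h3: "\<forall>X\<in>quot_ideal R T M. \<forall>Y\<in>quot_ideal R T M.
      hadd (quot R M) X (hneg (quot R M) Y) \<subseteq> quot_ideal R T M"
  proof (intro ballI subsetI)
    fix X Y W assume X: "X \<in> quot_ideal R T M" and Y: "Y \<in> quot_ideal R T M"
      and W: "W \<in> hadd (quot R M) X (hneg (quot R M) Y)"
    obtain a where a: "a \<in> T" "X = coset R M a" using X unfolding quot_ideal_def by blast
    obtain b where b: "b \<in> T" "Y = coset R M b" using Y unfolding quot_ideal_def by blast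
    have ac: "a \<in> hcarrier R" and bc: "b \<in> hcarrier R" using a b TC by auto
    have "W \<in> hadd (quot R M) (coset R M a) (coset R M (hneg R b))"
      using W a b quot_neg[OF M bc] by simp
    then obtain c a' b' where c: "W = coset R M c" "a' \<in> hcarrier R" "b' \<in> hcarrier R"
      "coset R M a = coset R M a'" "coset R M (hneg R b) = coset R M b'" "c \<in> hadd R a' b'"
      unfolding quot_add by blast
    have "a' \<in> coset R M a" using coset_eqD[OF M c(2)] c(4) by simp
    then have a'T: "a' \<in> T" using coset_in_ideal[OF M MT T a(1)] by blast
    have "b' \<in> coset R M (hneg R b)" using coset_eqD[OF M c(3)] c(5) by simp
    then have b'T: "b' \<in> T" using coset_in_ideal[OF M MT T ideal_neg[OF T b(1)]] by blast
    have "c \<in> T" using ideal_add[OF T a'T b'T] c(6) by blast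
    then show "W \<in> quot_ideal R T M" unfolding quot_ideal_def using c(1) by blast
  qed
  have h4: "\<forall>r\<in>hcarrier (quot R M). \<forall>X\<in>quot_ideal R T M. hmult (quot R M) r X \<in> quot_ideal R T M"
  proof (intro ballI)
    fix r X assume r: "r \<in> hcarrier (quot R M)" and X: "X \<in> quot_ideal R T M"
    obtain a where a: "a \<in> T" "X = coset R M a" using X unfolding quot_ideal_def by blast
    obtain c where c: "c \<in> hcarrier R" "r = coset R M c" using r unfolding quot_carrier by blast
    have "hmult (quot R M) r X = coset R M (hmult R c a)" using quot_mult[OF M c(1)] a c TC by auto
    moreover have "hmult R c a \<in> T" using ideal_mul[OF T c(1) a(1)] .
    ultimately show "hmult (quot R M) r X \<in> quot_ideal R T M" unfolding quot_ideal_def by blast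
  qed
  have NT: "{x \<in> hcarrier R. coset R M x \<in> quot_ideal R T M} = T"
  proof
    show "T \<subseteq> {x \<in> hcarrier R. coset R M x \<in> quot_ideal R T M}" using TC unfolding quot_ideal_def by blast
    show "{x \<in> hcarrier R. coset R M x \<in> quot_ideal R T M} \<subseteq> T"
    proof
      fix x assume "x \<in> {x \<in> hcarrier R. coset R M x \<in> quot_ideal R T M}"
      then obtain t where t: "x \<in> hcarrier R" "t \<in> T" "coset R M x = coset R M t"
        unfolding quot_ideal_def by blast
      have "x \<in> coset R M t" using coset_eqD[OF M t(1)] t(3) by simp
      then show "x \<in> T" using coset_in_ideal[OF M MT T t(2)] by blast
    qed
  qed
  have psi: "phi_quot R \<phi> M (quot_ideal R T M) =
      (if \<phi> T = {} then {} else quot_ideal R (hadd_set R (\<phi> T) M) M)"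
    unfolding phi_quot_def Let_def NT ..
  have h5: "\<forall>X\<in>hcarrier (quot R M). \<forall>Y\<in>hcarrier (quot R M).
     hmult (quot R M) X Y \<in> quot_ideal R T M \<and> hmult (quot R M) X Y \<notin> phi_quot R \<phi> M (quot_ideal R T M)
     \<longrightarrow> X \<in> quot_ideal R T M \<or> Y \<in> quot_ideal R T M"
  proof (intro ballI impI)
    fix X Y assume X: "X \<in> hcarrier (quot R M)" and Y: "Y \<in> hcarrier (quot R M)"
      and H: "hmult (quot R M) X Y \<in> quot_ideal R T M \<and> hmult (quot R M) X Y \<notin> phi_quot R \<phi> M (quot_ideal R T M)"
    obtain a where a: "a \<in> hcarrier R" "X = coset R M a" using X unfolding quot_carrier by blast
    obtain b where b: "b \<in> hcarrier R" "Y = coset R M b" using Y unfolding quot_carrier by blast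
    have XY: "hmult (quot R M) X Y = coset R M (hmult R a b)" using quot_mult[OF M a(1) b(1)] a b by simp
    have abc: "hmult R a b \<in> hcarrier R" using a b by simp
    have "coset R M (hmult R a b) \<in> quot_ideal R T M" using H XY by simp
    then have "hmult R a b \<in> {x \<in> hcarrier R. coset R M x \<in> quot_ideal R T M}" using abc by simp
    then have "hmult R a b \<in> T" unfolding NT .
    moreover have "hmult R a b \<notin> \<phi> T"
    proof
      assume ab: "hmult R a b \<in> \<phi> T"
      have "hmult R a b \<in> hadd R (hmult R a b) (hzero R)" using add_zero[OF abc] by simp
      then have "hmult R a b \<in> hadd_set R (\<phi> T) M" unfolding hadd_set_def using ab ideal_zero[OF M] by blast
      then have "coset R M (hmult R a b) \<in> phi_quot R \<phi> M (quot_ideal R T M)"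
        unfolding psi using ab by (auto simp: quot_ideal_def)
      then show False using H XY by simp
    qed
    ultimately have "a \<in> T \<or> b \<in> T" using Pr a b by blast
    then show "X \<in> quot_ideal R T M \<or> Y \<in> quot_ideal R T M" unfolding quot_ideal_def using a b by blast
  qed
  show ?thesis unfolding phi_prime_def hyperideal_def[of "quot R M"] using h1 h2 h3 h4 h5 by blast
qed

end

context KR begin

context fixes S assumes S: "mult_closed R S"
begin

lemma S_C: "s \<in> S \<Longrightarrow> s \<in> hcarrier R" using S unfolding mult_closed_def by blast
lemma one_S: "hone R \<in> S" using S unfolding mult_closed_def by blast
lemma S_mul: "s \<in> S \<Longrightarrow> t \<in> S \<Longrightarrow> hmult R s t \<in> S" using S unfolding mult_closed_def by blast

lemma frac_mem: "(b,t) \<in> frac R S a s \<longleftrightarrow> b \<in> hcarrier R \<and> t \<in> S \<and>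
   (\<exists>u\<in>S. hmult R u (hmult R a t) = hmult R u (hmult R b s))"
  unfolding frac_def by simp

lemma frac_sub:
  assumes a: "a \<in> hcarrier R" and b: "b \<in> hcarrier R" and s: "s \<in> S" and t: "t \<in> S"
    and u: "u \<in> S" and e: "hmult R u (hmult R a t) = hmult R u (hmult R b s)"
  shows "frac R S a s \<subseteq> frac R S b t"
proof
  fix p assume p: "p \<in> frac R S a s"
  obtain c r where pcr: "p = (c, r)" by (cases p)
  then have c: "c \<in> hcarrier R" and r: "r \<in> S" and "\<exists>v\<in>S. hmult R v (hmult R a r) = hmult R v (hmult R c s)"
    using p frac_mem by auto
  then obtain v where v: "v \<in> S" "hmult R v (hmult R a r) = hmult R v (hmult R c s)" by blast
  have C: "s \<in> hcarrier R" "t \<in> hcarrier R" "u \<in> hcarrier R" "v \<in> hcarrier R" "r \<in> hcarrier R"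
    using S_C s t u v r by auto
  have "hmult R (hmult R u (hmult R v s)) (hmult R b r) = hmult R (hmult R v r) (hmult R u (hmult R b s))"
    using C a b c by (simp add: mul_ac)
  also have "\<dots> = hmult R (hmult R v r) (hmult R u (hmult R a t))" using e by simp
  also have "\<dots> = hmult R (hmult R u t) (hmult R v (hmult R a r))" using C a b c by (simp add: mul_ac)
  also have "\<dots> = hmult R (hmult R u t) (hmult R v (hmult R c s))" using v by simp
  also have "\<dots> = hmult R (hmult R u (hmult R v s)) (hmult R c t)" using C a b c by (simp add: mul_ac)
  finally have "hmult R (hmult R u (hmult R v s)) (hmult R b r) = hmult R (hmult R u (hmult R v s)) (hmult R c t)" .
  moreover have "hmult R u (hmult R v s) \<in> S" using S_mul u v s by simp
  ultimately show "p \<in> frac R S b t" using pcr frac_mem c r by metis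
qed

lemma frac_eq_iff:
  assumes a: "a \<in> hcarrier R" and b: "b \<in> hcarrier R" and s: "s \<in> S" and t: "t \<in> S"
  shows "frac R S a s = frac R S b t \<longleftrightarrow> (\<exists>u\<in>S. hmult R u (hmult R a t) = hmult R u (hmult R b s))"
proof
  assume "frac R S a s = frac R S b t"
  moreover have "(b, t) \<in> frac R S b t" unfolding frac_mem using b t one_S by blast
  ultimately have "(b, t) \<in> frac R S a s" by simp
  then show "\<exists>u\<in>S. hmult R u (hmult R a t) = hmult R u (hmult R b s)" unfolding frac_mem by blast
next
  assume "\<exists>u\<in>S. hmult R u (hmult R a t) = hmult R u (hmult R b s)"
  then obtain u where u: "u \<in> S" "hmult R u (hmult R a t) = hmult R u (hmult R b s)" by blast
  show "frac R S a s = frac R S b t"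
    using frac_sub[OF a b s t u] frac_sub[OF b a t s u(1) u(2)[symmetric]] by blast
qed

lemma frac_eqI:
  assumes "a \<in> hcarrier R" "b \<in> hcarrier R" "s \<in> S" "t \<in> S"
    "u \<in> S" "hmult R u (hmult R a t) = hmult R u (hmult R b s)"
  shows "frac R S a s = frac R S b t"
  using frac_eq_iff assms by blast

lemma frac_eqE:
  assumes "a \<in> hcarrier R" "b \<in> hcarrier R" "s \<in> S" "t \<in> S" "frac R S a s = frac R S b t"
  obtains u where "u \<in> S" "hmult R u (hmult R a t) = hmult R u (hmult R b s)"
  using frac_eq_iff assms by blast

lemma loc_carrier: "hcarrier (localization R S) = {frac R S a s | a s. a \<in> hcarrier R \<and> s \<in> S}"
  unfolding localization_def by simp
lemma loc_add: "hadd (localization R S) X Y = {frac R S c (hmult R s t) | c a b s t.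
                  a \<in> hcarrier R \<and> b \<in> hcarrier R \<and> s \<in> S \<and> t \<in> S \<and>
                  X = frac R S a s \<and> Y = frac R S b t \<and>
                  c \<in> hadd R (hmult R a t) (hmult R b s)}"
  unfolding localization_def by simp

lemma loc_mult: assumes a: "a \<in> hcarrier R" and b: "b \<in> hcarrier R" and s: "s \<in> S" and t: "t \<in> S"
  shows "hmult (localization R S) (frac R S a s) (frac R S b t) = frac R S (hmult R a b) (hmult R s t)"
  unfolding localization_def hyperring.select_convs
  apply (rule the_equality)
  subgoal apply (rule exI[of _ a], rule exI[of _ b], rule exI[of _ s], rule exI[of _ t]) using a b s t by simp
  subgoal premises p for Z
  proof -
    obtain a' b' s' t' where q: "a' \<in> hcarrier R" "b' \<in> hcarrier R" "s' \<in> S" "t' \<in> S"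
      "frac R S a s = frac R S a' s'" "frac R S b t = frac R S b' t'"
      "Z = frac R S (hmult R a' b') (hmult R s' t')" using p by blast
    obtain u where u: "u \<in> S" "hmult R u (hmult R a s') = hmult R u (hmult R a' s)"
      using frac_eqE[OF a q(1) s q(3) q(5)] by blast
    obtain v where v: "v \<in> S" "hmult R v (hmult R b t') = hmult R v (hmult R b' t)"
      using frac_eqE[OF b q(2) t q(4) q(6)] by blast
    have C: "s \<in> hcarrier R" "t \<in> hcarrier R" "u \<in> hcarrier R" "v \<in> hcarrier R"
      "s' \<in> hcarrier R" "t' \<in> hcarrier R"
      using S_C s t u v q by auto
    have "hmult R (hmult R u v) (hmult R (hmult R a' b') (hmult R s t)) =
       hmult R (hmult R u (hmult R a' s)) (hmult R v (hmult R b' t))" using C a b q by (simp add: mul_ac)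
    also have "\<dots> = hmult R (hmult R u (hmult R a s')) (hmult R v (hmult R b t'))" using u v by simp
    also have "\<dots> = hmult R (hmult R u v) (hmult R (hmult R a b) (hmult R s' t'))" using C a b q by (simp add: mul_ac)
    finally have e: "hmult R (hmult R u v) (hmult R (hmult R a' b') (hmult R s t)) =
       hmult R (hmult R u v) (hmult R (hmult R a b) (hmult R s' t'))" .
    have "frac R S (hmult R a' b') (hmult R s' t') = frac R S (hmult R a b) (hmult R s t)"
      apply (rule frac_eqI[OF _ _ _ _ _ e])
      using q a b s t u v S_mul by auto
    then show "Z = frac R S (hmult R a b) (hmult R s t)" using q(7) by simp
  qed
  done

lemma loc_neg: assumes b: "b \<in> hcarrier R" and t: "t \<in> S"
  shows "hneg (localization R S) (frac R S b t) = frac R S (hneg R b) t"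
  unfolding hneg_def[of "localization R S"] unfolding localization_def hyperring.select_convs
  apply (rule the_equality)
  subgoal apply (rule conjI)
    subgoal using b t neg_in[OF b] by blast
    apply (rule CollectI, rule exI[of _ "hzero R"], rule exI[of _ b], rule exI[of _ "hneg R b"],
       rule exI[of _ t], rule exI[of _ t])
  proof -
    have tc: "t \<in> hcarrier R" using S_C t .
    have "hmult R t (hzero R) \<in> hadd R (hmult R t b) (hmult R t (hneg R b))"
      using distribD[OF tc b neg_in[OF b]] neg[OF b] by blast
    then have "hzero R \<in> hadd R (hmult R b t) (hmult R (hneg R b) t)" using tc b mul_comm by simp
    moreover have "frac R S (hzero R) (hone R) = frac R S (hzero R) (hmult R t t)"
      using frac_eqI[of "hzero R" "hzero R" "hone R" "hmult R t t" "hone R"] one_S S_mul t tc by simp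
    ultimately show "frac R S (hzero R) (hone R) = frac R S (hzero R) (hmult R t t) \<and>
      b \<in> hcarrier R \<and> hneg R b \<in> hcarrier R \<and> t \<in> S \<and> t \<in> S \<and>
      frac R S b t = frac R S b t \<and> frac R S (hneg R b) t = frac R S (hneg R b) t \<and>
      hzero R \<in> hadd R (hmult R b t) (hmult R (hneg R b) t)" using b t by simp
  qed
  subgoal premises p for Z
  proof -
    from p have "frac R S (hzero R) (hone R) \<in> {frac R S c (hmult R s' t') | c a' b' s' t'.
                  a' \<in> hcarrier R \<and> b' \<in> hcarrier R \<and> s' \<in> S \<and> t' \<in> S \<and>
                  frac R S b t = frac R S a' s' \<and> Z = frac R S b' t' \<and>
                  c \<in> hadd R (hmult R a' t') (hmult R b' s')}" by (rule conjunct2)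
    then obtain c a' b' s' t' where q: "frac R S (hzero R) (hone R) = frac R S c (hmult R s' t')"
      "a' \<in> hcarrier R" "b' \<in> hcarrier R" "s' \<in> S" "t' \<in> S"
      "frac R S b t = frac R S a' s'" "Z = frac R S b' t'" "c \<in> hadd R (hmult R a' t') (hmult R b' s')"
      by blast
    have C: "s' \<in> hcarrier R" "t' \<in> hcarrier R" "t \<in> hcarrier R" using q t S_C by auto
    have cC: "c \<in> hcarrier R" using add_closed[of "hmult R a' t'" "hmult R b' s'"] q C by auto
    have st: "hmult R s' t' \<in> S" using S_mul q by simp
    obtain u where u: "u \<in> S" "hmult R u (hmult R (hzero R) (hmult R s' t')) = hmult R u (hmult R c (hone R))"
      using frac_eqE[OF zero_in cC one_S st q(1)] by blast
    have uC: "u \<in> hcarrier R" using S_C u by simp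
    have uc: "hmult R u c = hzero R" using u uC cC C by simp
    have "hmult R u c \<in> hadd R (hmult R u (hmult R a' t')) (hmult R u (hmult R b' s'))"
      using distribD[OF uC _ _ q(8)] q C by simp
    then have "hzero R \<in> hadd R (hmult R u (hmult R a' t')) (hmult R u (hmult R b' s'))" using uc by simp
    then have e0: "hmult R u (hmult R b' s') = hneg R (hmult R u (hmult R a' t'))"
      using neg_unique uC q C by simp
    have e1: "hmult R u (hmult R b' s') = hmult R u (hmult R (hneg R a') t')"
      using e0 neg_mul mul_neg uC q C by simp
    have f1: "frac R S b' t' = frac R S (hneg R a') s'"
      using frac_eqI[OF q(3) neg_in[OF q(2)] q(5) q(4) u(1) e1] .
    obtain v where v: "v \<in> S" "hmult R v (hmult R b s') = hmult R v (hmult R a' t)"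
      using frac_eqE[OF b q(2) t q(4) q(6)] by blast
    have vC: "v \<in> hcarrier R" using S_C v by simp
    have e2: "hmult R v (hmult R (hneg R a') t) = hmult R v (hmult R (hneg R b) s')"
      using v(2) neg_mul mul_neg vC q C b by simp
    have f2: "frac R S (hneg R a') s' = frac R S (hneg R b) t"
      using frac_eqI[OF neg_in[OF q(2)] neg_in[OF b] q(4) t v(1) e2] .
    show "Z = frac R S (hneg R b) t" using q(7) f1 f2 by simp
  qed
  done

end
end

context KR begin

lemma part2:
  assumes PF: "phi_function R \<phi>" and P: "phi_prime R \<phi> T" and S: "mult_closed R S"
    and TS: "T \<inter> S = {}" and H: "loc_ideal R S (\<phi> T) \<subseteq> phi_loc R \<phi> S (loc_ideal R S T)"
  shows "phi_prime (localization R S) (phi_loc R \<phi> S) (loc_ideal R S T)"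
proof -
  have T: "hyperideal R T" using P unfolding phi_prime_def by blast
  have Pr: "\<And>a b. a \<in> hcarrier R \<Longrightarrow> b \<in> hcarrier R \<Longrightarrow> hmult R a b \<in> T \<Longrightarrow> hmult R a b \<notin> \<phi> T
     \<Longrightarrow> a \<in> T \<or> b \<in> T" using P unfolding phi_prime_def by blast
  have TC: "\<And>x. x \<in> T \<Longrightarrow> x \<in> hcarrier R" using ideal_subD[OF T] .
  have SC: "\<And>x. x \<in> S \<Longrightarrow> x \<in> hcarrier R" using S_C[OF S] .
  have SM: "\<And>x y. x \<in> S \<Longrightarrow> y \<in> S \<Longrightarrow> hmult R x y \<in> S" using S_mul[OF S] .
  have k1: "loc_ideal R S T \<subseteq> hcarrier (localization R S)"
    unfolding loc_carrier[OF S] loc_ideal_def using TC by blast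
  have k2: "loc_ideal R S T \<noteq> {}" unfolding loc_ideal_def using ideal_zero[OF T] one_S[OF S] by blast
  have k3: "\<forall>X\<in>loc_ideal R S T. \<forall>Y\<in>loc_ideal R S T.
      hadd (localization R S) X (hneg (localization R S) Y) \<subseteq> loc_ideal R S T"
  proof (intro ballI subsetI)
    fix X Y W assume X: "X \<in> loc_ideal R S T" and Y: "Y \<in> loc_ideal R S T"
      and W: "W \<in> hadd (localization R S) X (hneg (localization R S) Y)"
    obtain a s where a: "a \<in> T" "s \<in> S" "X = frac R S a s" using X unfolding loc_ideal_def by blast
    obtain b t where b: "b \<in> T" "t \<in> S" "Y = frac R S b t" using Y unfolding loc_ideal_def by blast
    have "W \<in> hadd (localization R S) (frac R S a s) (frac R S (hneg R b) t)"
      using W a b loc_neg[OF S TC[OF b(1)] b(2)] by simp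
    then obtain c a' b' s' t' where q: "W = frac R S c (hmult R s' t')"
      "a' \<in> hcarrier R" "b' \<in> hcarrier R" "s' \<in> S" "t' \<in> S"
      "frac R S a s = frac R S a' s'" "frac R S (hneg R b) t = frac R S b' t'"
      "c \<in> hadd R (hmult R a' t') (hmult R b' s')"
      unfolding loc_add[OF S] by blast
    have aC: "a \<in> hcarrier R" using TC a by simp
    have nbC: "hneg R b \<in> hcarrier R" using TC b by simp
    have C: "s \<in> hcarrier R" "t \<in> hcarrier R" "s' \<in> hcarrier R" "t' \<in> hcarrier R"
      using SC a b q by auto
    obtain u where u: "u \<in> S" "hmult R u (hmult R a s') = hmult R u (hmult R a' s)"
      using frac_eqE[OF S aC q(2) a(2) q(4) q(6)] by blast
    obtain v where v: "v \<in> S" "hmult R v (hmult R (hneg R b) t') = hmult R v (hmult R b' t)"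
      using frac_eqE[OF S nbC q(3) b(2) q(5) q(7)] by blast
    have uC: "u \<in> hcarrier R" and vC: "v \<in> hcarrier R" using u v SC by auto
    have x1: "hmult R (hmult R u s) a' \<in> T"
    proof -
      have "hmult R (hmult R u s) a' = hmult R u (hmult R a' s)" using uC C q by (simp add: mul_ac)
      also have "\<dots> = hmult R u (hmult R a s')" using u by simp
      finally show ?thesis using ideal_mul[OF T uC ideal_mul2[OF T C(3) a(1)]] by simp
    qed
    have x2: "hmult R (hmult R v t) b' \<in> T"
    proof -
      have "hmult R (hmult R v t) b' = hmult R v (hmult R b' t)" using vC C q by (simp add: mul_ac)
      also have "\<dots> = hmult R v (hmult R (hneg R b) t')" using v by simp
      finally show ?thesis using ideal_mul[OF T vC ideal_mul2[OF T C(4) ideal_neg[OF T b(1)]]] by simp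
    qed
    define k where "k = hmult R (hmult R u s) (hmult R v t)"
    have kS: "k \<in> S" unfolding k_def using SM u v a b by simp
    have kC: "k \<in> hcarrier R" using SC kS by simp
    have cC: "c \<in> hcarrier R" using add_closed[of "hmult R a' t'" "hmult R b' s'"] q C by auto
    have "hmult R k c \<in> hadd R (hmult R k (hmult R a' t')) (hmult R k (hmult R b' s'))"
      using distribD[OF kC _ _ q(8)] q C by simp
    moreover have e1: "hmult R k (hmult R a' t') = hmult R (hmult R (hmult R u s) a') (hmult R (hmult R v t) t')"
      unfolding k_def using uC vC C q by (simp add: mul_ac)
    moreover have e2: "hmult R k (hmult R b' s') = hmult R (hmult R (hmult R v t) b') (hmult R (hmult R u s) s')"
      unfolding k_def using uC vC C q by (simp add: mul_ac)
    moreover have y1: "hmult R (hmult R (hmult R u s) a') (hmult R (hmult R v t) t') \<in> T"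
      using ideal_mul2[OF T _ x1] vC C by simp
    moreover have y2: "hmult R (hmult R (hmult R v t) b') (hmult R (hmult R u s) s') \<in> T"
      using ideal_mul2[OF T _ x2] uC C by simp
    ultimately have "hmult R k c \<in> hadd R (hmult R (hmult R (hmult R u s) a') (hmult R (hmult R v t) t'))
        (hmult R (hmult R (hmult R v t) b') (hmult R (hmult R u s) s'))" by simp
    then have kcT: "hmult R k c \<in> T" using ideal_add[OF T y1 y2] by blast
    have st: "hmult R s' t' \<in> S" using SM q by simp
    have "hmult R (hone R) (hmult R c (hmult R k (hmult R s' t'))) =
          hmult R (hone R) (hmult R (hmult R k c) (hmult R s' t'))" using kC cC C by (simp add: mul_ac)
    then have "frac R S c (hmult R s' t') = frac R S (hmult R k c) (hmult R k (hmult R s' t'))"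
      by (rule frac_eqI[OF S cC mul_closed[OF kC cC] st SM[OF kS st] one_S[OF S]])
    then show "W \<in> loc_ideal R S T" unfolding loc_ideal_def using q(1) kcT SM kS st by blast
  qed
  have k4: "\<forall>r\<in>hcarrier (localization R S). \<forall>X\<in>loc_ideal R S T. hmult (localization R S) r X \<in> loc_ideal R S T"
  proof (intro ballI)
    fix r X assume r: "r \<in> hcarrier (localization R S)" and X: "X \<in> loc_ideal R S T"
    obtain a s where a: "a \<in> T" "s \<in> S" "X = frac R S a s" using X unfolding loc_ideal_def by blast
    obtain c w where c: "c \<in> hcarrier R" "w \<in> S" "r = frac R S c w" using r unfolding loc_carrier[OF S] by blast
    have "hmult (localization R S) r X = frac R S (hmult R c a) (hmult R w s)"
      using loc_mult[OF S c(1) TC[OF a(1)] c(2) a(2)] a c by simp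
    moreover have "hmult R c a \<in> T" using ideal_mul[OF T c(1) a(1)] .
    ultimately show "hmult (localization R S) r X \<in> loc_ideal R S T" unfolding loc_ideal_def
      using SM a c by blast
  qed
  have k5: "\<forall>X\<in>hcarrier (localization R S). \<forall>Y\<in>hcarrier (localization R S).
     hmult (localization R S) X Y \<in> loc_ideal R S T \<and> hmult (localization R S) X Y \<notin> phi_loc R \<phi> S (loc_ideal R S T)
     \<longrightarrow> X \<in> loc_ideal R S T \<or> Y \<in> loc_ideal R S T"
  proof (intro ballI impI)
    fix X Y assume X: "X \<in> hcarrier (localization R S)" and Y: "Y \<in> hcarrier (localization R S)"
      and HH: "hmult (localization R S) X Y \<in> loc_ideal R S T \<and>
               hmult (localization R S) X Y \<notin> phi_loc R \<phi> S (loc_ideal R S T)"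
    obtain a s where a: "a \<in> hcarrier R" "s \<in> S" "X = frac R S a s" using X unfolding loc_carrier[OF S] by blast
    obtain b t where b: "b \<in> hcarrier R" "t \<in> S" "Y = frac R S b t" using Y unfolding loc_carrier[OF S] by blast
    have XY: "hmult (localization R S) X Y = frac R S (hmult R a b) (hmult R s t)"
      using loc_mult[OF S a(1) b(1) a(2) b(2)] a b by simp
    have sC: "s \<in> hcarrier R" and tC: "t \<in> hcarrier R" using SC a b by auto
    have stS: "hmult R s t \<in> S" using SM a b by simp
    have abC: "hmult R a b \<in> hcarrier R" using a b by simp
    obtain d r where d: "d \<in> T" "r \<in> S" "frac R S (hmult R a b) (hmult R s t) = frac R S d r"
      using HH XY unfolding loc_ideal_def by auto
    have rC: "r \<in> hcarrier R" using SC d by simp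
    obtain u where u: "u \<in> S" "hmult R u (hmult R (hmult R a b) r) = hmult R u (hmult R d (hmult R s t))"
      using frac_eqE[OF S abC TC[OF d(1)] stS d(2) d(3)] by blast
    have uC: "u \<in> hcarrier R" using SC u by simp
    define x where "x = hmult R (hmult R u r) a"
    have xC: "x \<in> hcarrier R" unfolding x_def using uC rC a by simp
    have urS: "hmult R u r \<in> S" using SM u d by simp
    have "hmult R x b = hmult R u (hmult R (hmult R a b) r)" unfolding x_def using uC rC a b by (simp add: mul_ac)
    also have "\<dots> = hmult R u (hmult R d (hmult R s t))" using u by simp
    finally have xbT: "hmult R x b \<in> T"
      using ideal_mul[OF T uC ideal_mul2[OF T _ d(1)]] sC tC by simp
    have xbnot: "hmult R x b \<notin> \<phi> T"
    proof
      assume xb: "hmult R x b \<in> \<phi> T"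
      have "hmult R (hone R) (hmult R (hmult R a b) (hmult R (hmult R u r) (hmult R s t))) =
            hmult R (hone R) (hmult R (hmult R x b) (hmult R s t))"
        unfolding x_def using uC rC a b sC tC by (simp add: mul_ac)
      then have "frac R S (hmult R a b) (hmult R s t) = frac R S (hmult R x b) (hmult R (hmult R u r) (hmult R s t))"
        by (rule frac_eqI[OF S abC mul_closed[OF xC b(1)] stS SM[OF urS stS] one_S[OF S]])
      then have "frac R S (hmult R a b) (hmult R s t) \<in> loc_ideal R S (\<phi> T)"
        unfolding loc_ideal_def using xb SM urS stS by blast
      then show False using H HH XY by auto
    qed
    have "x \<in> T \<or> b \<in> T" using Pr[OF xC b(1) xbT xbnot] .
    moreover have "x \<in> T \<Longrightarrow> a \<in> T"
    proof -
      assume xT: "x \<in> T"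
      have "x \<notin> \<phi> T"
      proof
        assume "x \<in> \<phi> T"
        moreover have "\<phi> T \<noteq> {} \<Longrightarrow> hyperideal R (\<phi> T)" using PF T unfolding phi_function_def by blast
        ultimately have "hmult R x b \<in> \<phi> T" using ideal_mul2 b by blast
        then show False using xbnot by simp
      qed
      then have "hmult R u r \<in> T \<or> a \<in> T" using Pr[OF SC[OF urS] a(1)] xT unfolding x_def by blast
      then show "a \<in> T" using TS urS by blast
    qed
    ultimately have "a \<in> T \<or> b \<in> T" by blast
    then show "X \<in> loc_ideal R S T \<or> Y \<in> loc_ideal R S T" unfolding loc_ideal_def using a b by blast
  qed
  show ?thesis unfolding phi_prime_def hyperideal_def[of "localization R S"] using k1 k2 k3 k4 k5 by blast
qed

end

theorem mainTheorem10:
  fixes R :: "'a hyperring" and \<phi> :: "'a set \<Rightarrow> 'a set" and T :: "'a set"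
  assumes "krasner_hyperring R"
    and "phi_function R \<phi>"
    and "phi_prime R \<phi> T"
    and "T \<noteq> hcarrier R"
  shows "(\<forall>M. hyperideal R M \<and> M \<subseteq> T \<longrightarrow>
            phi_prime (quot R M) (phi_quot R \<phi> M) (quot_ideal R T M))
       \<and> (\<forall>S. mult_closed R S \<and> T \<inter> S = {} \<and>
            loc_ideal R S (\<phi> T) \<subseteq> phi_loc R \<phi> S (loc_ideal R S T) \<longrightarrow>
            phi_prime (localization R S) (phi_loc R \<phi> S) (loc_ideal R S T))"
proof -
  interpret KR R using assms(1) by unfold_locales
  show ?thesis
  proof (intro conjI allI impI)
    fix M assume "hyperideal R M \<and> M \<subseteq> T"
    then show "phi_prime (quot R M) (phi_quot R \<phi> M) (quot_ideal R T M)"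
      using part1 assms(3) by blast
  next
    fix S assume "mult_closed R S \<and> T \<inter> S = {} \<and>
            loc_ideal R S (\<phi> T) \<subseteq> phi_loc R \<phi> S (loc_ideal R S T)"
    then show "phi_prime (localization R S) (phi_loc R \<phi> S) (loc_ideal R S T)"
      using part2 assms(2,3) by blast
  qed
qed

end
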